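(* Let $\mu$ be a positive finite Borel measure on $[0,1)$ and let $v,w$ be weights on $\mathbb{D}$ such that $1/v\in L_1([0,1),\mu)$ and $I_\mu:H^0_v\to H^0_w$ is (well defined and) continuous. Then $I_\mu:H^0_v\to H^0_w$ and $I_\mu:H^\infty_v\to H^\infty_w$ are compact if and only if $I_\mu(H^\infty_v)\subseteq H^0_w$.
   Context: $\mathbb{D}$ is the open unit disc and $H(\mathbb{D})$ the holomorphic functions on $\mathbb{D}$. A weight is a function $v:\mathbb{D}\to(0,\infty)$ that is radial, continuous, non-increasing in $|z|$, with $\lim_{r\to1^-}v(r)=0$. $H^\infty_v=\{f\in H(\mathbb{D}):\|f\|_v:=\sup_{z}v(z)|f(z)|<\infty\}$ and $H^0_v=\{f\in H^\infty_v:\lim_{|z|\to1^-}v(z)|f(z)|=0\}$, with norm $\|\cdot\|_v$. $I_\mu(f)(z)=\int_0^1\frac{f(t)}{1-tz}\,d\mu(t)$ whenever this defines a holomorphic function on $\mathbb{D}$. *)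

theory Defs
  imports "HOL-Analysis.Analysis"
begin

definition weight :: "(complex \<Rightarrow> real) \<Rightarrow> bool" where
  "weight v \<longleftrightarrow>
     (\<forall>z\<in>ball 0 1. v z > 0) \<and>
     (\<forall>z\<in>ball 0 1. v z = v (complex_of_real (cmod z))) \<and>
     continuous_on (ball 0 1) v \<and>
     (\<forall>z\<in>ball 0 1. \<forall>u\<in>ball 0 1. cmod z \<le> cmod u \<longrightarrow> v u \<le> v z) \<and>
     ((\<lambda>r. v (complex_of_real r)) \<longlongrightarrow> 0) (at_left 1)"

definition Hinf :: "(complex \<Rightarrow> real) \<Rightarrow> (complex \<Rightarrow> complex) set" where
  "Hinf v = {f. f holomorphic_on ball 0 1 \<and> (\<exists>C. \<forall>z\<in>ball 0 1. v z * cmod (f z) \<le> C)}"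

definition H0 :: "(complex \<Rightarrow> real) \<Rightarrow> (complex \<Rightarrow> complex) set" where
  "H0 v = {f \<in> Hinf v. \<forall>\<epsilon>>0. \<exists>r<1. \<forall>z\<in>ball 0 1. r < cmod z \<longrightarrow> v z * cmod (f z) \<le> \<epsilon>}"

definition Iop :: "real measure \<Rightarrow> (complex \<Rightarrow> complex) \<Rightarrow> complex \<Rightarrow> complex" where
  "Iop M f = (\<lambda>z. LINT t|M. f (complex_of_real t) / (1 - complex_of_real t * z))"

text \<open>Boundedness (= continuity, by linearity) w.r.t. the weighted sup norms:
  norm_w (T f) \<le> C * norm_v f.\<close>
definition bounded_op ::
  "((complex \<Rightarrow> complex) \<Rightarrow> complex \<Rightarrow> complex) \<Rightarrow> (complex \<Rightarrow> complex) set \<Rightarrow>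
   (complex \<Rightarrow> real) \<Rightarrow> (complex \<Rightarrow> real) \<Rightarrow> bool" where
  "bounded_op T X v w \<longleftrightarrow> (\<exists>C. \<forall>f\<in>X. \<forall>B::real.
      (\<forall>z\<in>ball 0 1. v z * cmod (f z) \<le> B) \<longrightarrow> (\<forall>z\<in>ball 0 1. w z * cmod (T f z) \<le> C * B))"

definition compact_op ::
  "((complex \<Rightarrow> complex) \<Rightarrow> complex \<Rightarrow> complex) \<Rightarrow> (complex \<Rightarrow> complex) set \<Rightarrow>
   (complex \<Rightarrow> complex) set \<Rightarrow> (complex \<Rightarrow> real) \<Rightarrow> (complex \<Rightarrow> real) \<Rightarrow> bool" where
  "compact_op T X Y v w \<longleftrightarrow>
     (\<forall>f\<in>X. T f \<in> Y) \<and>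
     (\<forall>F (B::real). (\<forall>n. F n \<in> X) \<and> (\<forall>n. \<forall>z\<in>ball 0 1. v z * cmod (F n z) \<le> B) \<longrightarrow>
        (\<exists>(r::nat\<Rightarrow>nat) g. strict_mono r \<and> g \<in> Y \<and>
           (\<forall>\<epsilon>>0. \<exists>N::nat. \<forall>n\<ge>N. \<forall>z\<in>ball 0 1. w z * cmod (T (F (r n)) z - g z) \<le> \<epsilon>)))"

end

theory Submission
  imports Defs "HOL-Complex_Analysis.Complex_Analysis"
begin

lemma weight_pos: "weight u \<Longrightarrow> z \<in> ball 0 1 \<Longrightarrow> u z > 0"
  unfolding weight_def by blast

lemma weight_mono: "weight u \<Longrightarrow> z \<in> ball 0 1 \<Longrightarrow> y \<in> ball 0 1 \<Longrightarrow> cmod z \<le> cmod y \<Longrightarrow> u y \<le> u z"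
  unfolding weight_def by blast

lemma weight_le0: "weight u \<Longrightarrow> z \<in> ball 0 1 \<Longrightarrow> u z \<le> u 0"
  by (rule weight_mono) auto

lemma weight_lim:
  assumes "weight u" "\<epsilon> > 0"
  shows "\<exists>r. 0 \<le> r \<and> r < 1 \<and> (\<forall>z\<in>ball 0 1. r < cmod z \<longrightarrow> u z \<le> \<epsilon>)"
proof -
  have "((\<lambda>r. u (complex_of_real r)) \<longlongrightarrow> 0) (at_left 1)" using assms(1) unfolding weight_def by blast
  then have "eventually (\<lambda>r. u (complex_of_real r) < \<epsilon>) (at_left (1::real))"
    using assms(2) by (auto dest: order_tendstoD)
  then obtain b where b: "b < 1" "\<And>y. b < y \<Longrightarrow> y < 1 \<Longrightarrow> u (complex_of_real y) < \<epsilon>"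
    by (auto simp: eventually_at_left_field)
  show ?thesis
  proof (intro exI[of _ "max b 0"] conjI ballI impI)
    fix z :: complex assume z: "z \<in> ball 0 1" "max b 0 < cmod z"
    have "u z = u (complex_of_real (cmod z))" using assms(1) z(1) unfolding weight_def by blast
    also have "\<dots> < \<epsilon>" using b z by auto
    finally show "u z \<le> \<epsilon>" by simp
  qed (use b in auto)
qed

lemma compact_in_ball:
  assumes "compact K" "K \<subseteq> ball (0::complex) 1"
  shows "\<exists>\<rho>. 0 \<le> \<rho> \<and> \<rho> < 1 \<and> (\<forall>z\<in>K. cmod z \<le> \<rho>)"
proof (cases "K = {}")
  case True then show ?thesis by (intro exI[of _ 0]) auto
next
  case False
  have "compact (norm ` K)" by (intro compact_continuous_image continuous_intros assms)
  then obtain x where "x \<in> norm ` K" "\<forall>y\<in>norm ` K. y \<le> x"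
    using False compact_attains_sup[of "norm ` K"] by blast
  then show ?thesis using assms(2) by (intro exI[of _ x]) auto
qed

lemma weight_lower:
  assumes "weight u" "0 \<le> \<rho>" "\<rho> < 1" "z \<in> ball 0 1" "cmod z \<le> \<rho>"
  shows "u (complex_of_real \<rho>) \<le> u z" "0 < u (complex_of_real \<rho>)"
proof -
  have r: "complex_of_real \<rho> \<in> ball 0 1" using assms by auto
  show "u (complex_of_real \<rho>) \<le> u z" by (rule weight_mono[OF assms(1) assms(4) r]) (use assms in simp)
  show "0 < u (complex_of_real \<rho>)" by (rule weight_pos[OF assms(1) r])
qed


lemma norm_one_minus_ge:
  fixes t :: real and z :: complex
  assumes "0 \<le> t" "t < 1" "cmod z < 1"
  shows "1 - cmod z \<le> cmod (1 - complex_of_real t * z)"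
proof -
  have "cmod (complex_of_real t * z) = t * cmod z" using assms by (simp add: norm_mult)
  also have "\<dots> \<le> cmod z" using assms by (intro mult_left_le_one_le) auto
  finally have "cmod (complex_of_real t * z) \<le> cmod z" .
  moreover have "1 - cmod (complex_of_real t * z) \<le> cmod (1 - complex_of_real t * z)"
    by (metis norm_one norm_triangle_ineq2)
  ultimately show ?thesis by linarith
qed

lemma geo_sum: "(\<Sum>j<J. (1/2::real)^j) = 2 - 2 * (1/2)^J"
  by (induction J) auto

lemma geo_le: "(\<Sum>j<J. (1/2::real)^j) \<le> 2"
  unfolding geo_sum by simp

locale setting =
  fixes M :: "real measure" and v w :: "complex \<Rightarrow> real"
  assumes sets_M: "sets M = sets (restrict_space borel {0..<1::real})"
    and wv: "weight v" and ww: "weight w"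
    and intv: "integrable M (\<lambda>t. 1 / v (complex_of_real t))"
begin

lemma space_M: "space M = {0..<1}"
  using sets_eq_imp_space_eq[OF sets_M] by (simp add: space_restrict_space)

lemma meas_cont:
  fixes g :: "real \<Rightarrow> 'b::topological_space"
  assumes "continuous_on {0..<1} g"
  shows "g \<in> borel_measurable M"
  using borel_measurable_continuous_on_restrict[OF assms] measurable_cong_sets[OF sets_M refl]
  by blast

lemma real_in_ball: "t \<in> {0..<1::real} \<Longrightarrow> complex_of_real t \<in> ball 0 1"
  by auto

lemma cont_real:
  assumes "continuous_on (ball 0 1) f"
  shows "continuous_on {0..<1::real} (\<lambda>t. f (complex_of_real t))"
  by (rule continuous_on_compose2[OF assms]) (auto intro: continuous_intros)

lemma meas_kernel:
  assumes "continuous_on (ball 0 1) f" "z \<in> ball 0 1"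
  shows "(\<lambda>t. f (complex_of_real t) / (1 - complex_of_real t * z)) \<in> borel_measurable M"
proof (rule meas_cont)
  have "\<forall>t\<in>{0..<1::real}. 1 - complex_of_real t * z \<noteq> 0"
  proof
    fix t :: real assume "t \<in> {0..<1}"
    then have "0 < cmod (1 - complex_of_real t * z)"
      using norm_one_minus_ge[of t z] assms(2) by auto
    then show "1 - complex_of_real t * z \<noteq> 0" by auto
  qed
  then show "continuous_on {0..<1} (\<lambda>t. f (complex_of_real t) / (1 - complex_of_real t * z))"
    by (intro continuous_intros cont_real assms) auto
qed

lemma meas_norm:
  assumes "continuous_on (ball 0 1) f"
  shows "(\<lambda>t. cmod (f (complex_of_real t))) \<in> borel_measurable M"
  by (rule meas_cont) (intro continuous_intros cont_real assms)

lemma pt_bound: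
  assumes "\<forall>z\<in>ball 0 1. v z * cmod (f z) \<le> C" "t \<in> {0..<1}"
  shows "cmod (f (complex_of_real t)) \<le> C * (1 / v (complex_of_real t))"
proof -
  have p: "v (complex_of_real t) > 0" using weight_pos[OF wv] assms(2) by auto
  have "v (complex_of_real t) * cmod (f (complex_of_real t)) \<le> C" using assms by auto
  then show ?thesis using p by (simp add: field_simps)
qed

lemma kernel_bound:
  assumes "\<forall>z\<in>ball 0 1. v z * cmod (f z) \<le> C" "t \<in> {0..<1}" "z \<in> ball 0 1"
  shows "cmod (f (complex_of_real t) / (1 - complex_of_real t * z)) \<le> (C / (1 - cmod z)) * (1 / v (complex_of_real t))"
proof -
  have d: "1 - cmod z \<le> cmod (1 - complex_of_real t * z)" "0 < 1 - cmod z"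
    using norm_one_minus_ge[of t z] assms by auto
  have "cmod (f (complex_of_real t) / (1 - complex_of_real t * z)) = cmod (f (complex_of_real t)) / cmod (1 - complex_of_real t * z)"
    by (simp add: norm_divide)
  also have "\<dots> \<le> cmod (f (complex_of_real t)) / (1 - cmod z)"
    using d by (intro divide_left_mono mult_pos_pos) auto
  also have "\<dots> \<le> (C * (1 / v (complex_of_real t))) / (1 - cmod z)"
    using pt_bound[OF assms(1,2)] d by (intro divide_right_mono) auto
  finally show ?thesis by (simp add: ac_simps)
qed

lemma integ_kernel:
  assumes "continuous_on (ball 0 1) f" "\<forall>z\<in>ball 0 1. v z * cmod (f z) \<le> C" "z \<in> ball 0 1"
  shows "integrable M (\<lambda>t. f (complex_of_real t) / (1 - complex_of_real t * z))"
proof (rule Bochner_Integration.integrable_bound[OF integrable_mult_left[OF intv, of "C / (1 - cmod z)"]])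
  show "(\<lambda>t. f (complex_of_real t) / (1 - complex_of_real t * z)) \<in> borel_measurable M"
    by (rule meas_kernel[OF assms(1,3)])
  show "AE x in M. norm (f (complex_of_real x) / (1 - complex_of_real x * z)) \<le> norm (1 / v (complex_of_real x) * (C / (1 - cmod z)))"
  proof (rule AE_I2)
    fix x assume "x \<in> space M"
    then have x: "x \<in> {0..<1}" by (simp add: space_M)
    show "norm (f (complex_of_real x) / (1 - complex_of_real x * z)) \<le> norm (1 / v (complex_of_real x) * (C / (1 - cmod z)))"
      using order_trans[OF kernel_bound[OF assms(2) x assms(3)] abs_ge_self] by (simp add: mult.commute)
  qed
qed

lemma integ_norm:
  assumes "continuous_on (ball 0 1) f" "\<forall>z\<in>ball 0 1. v z * cmod (f z) \<le> C"
  shows "integrable M (\<lambda>t. cmod (f (complex_of_real t)))"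
proof (rule Bochner_Integration.integrable_bound[OF integrable_mult_left[OF intv, of C]])
  show "(\<lambda>t. cmod (f (complex_of_real t))) \<in> borel_measurable M"
    by (rule meas_norm[OF assms(1)])
  show "AE x in M. norm (cmod (f (complex_of_real x))) \<le> norm (1 / v (complex_of_real x) * C)"
  proof (rule AE_I2)
    fix x assume "x \<in> space M"
    then have x: "x \<in> {0..<1}" by (simp add: space_M)
    show "norm (cmod (f (complex_of_real x))) \<le> norm (1 / v (complex_of_real x) * C)"
      using order_trans[OF pt_bound[OF assms(2) x] abs_ge_self] by (simp add: mult.commute)
  qed
qed

lemma Iop_bound:
  assumes "continuous_on (ball 0 1) f" "\<forall>z\<in>ball 0 1. v z * cmod (f z) \<le> C" "z \<in> ball 0 1"
  shows "cmod (Iop M f z) \<le> (LINT t|M. cmod (f (complex_of_real t))) / (1 - cmod z)"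
proof -
  have d: "0 < 1 - cmod z" using assms(3) by auto
  have "cmod (Iop M f z) \<le> (LINT t|M. cmod (f (complex_of_real t) / (1 - complex_of_real t * z)))"
    unfolding Iop_def by (rule integral_norm_bound)
  also have "\<dots> \<le> (LINT t|M. cmod (f (complex_of_real t)) / (1 - cmod z))"
  proof (rule integral_mono)
    show "integrable M (\<lambda>t. cmod (f (complex_of_real t) / (1 - complex_of_real t * z)))"
      using integ_kernel[OF assms] by (rule integrable_norm)
    show "integrable M (\<lambda>t. cmod (f (complex_of_real t)) / (1 - cmod z))"
      using integ_norm[OF assms(1,2)] by (rule integrable_divide)
    fix t assume "t \<in> space M"
    then have t: "t \<in> {0..<1}" by (simp add: space_M)
    have e: "1 - cmod z \<le> cmod (1 - complex_of_real t * z)"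
      using norm_one_minus_ge[of t z] t assms(3) by auto
    show "cmod (f (complex_of_real t) / (1 - complex_of_real t * z)) \<le> cmod (f (complex_of_real t)) / (1 - cmod z)"
      unfolding norm_divide using d e by (intro divide_left_mono mult_pos_pos) auto
  qed
  also have "\<dots> = (LINT t|M. cmod (f (complex_of_real t))) / (1 - cmod z)"
    by simp
  finally show ?thesis .
qed


lemma Iop_dct:
  assumes cF: "\<And>n. continuous_on (ball 0 1) (F n)"
    and bF: "\<And>n. \<forall>z\<in>ball 0 1. v z * cmod (F n z) \<le> C"
    and cf: "continuous_on (ball 0 1) f"
    and lim: "\<forall>t\<in>{0..<1}. (\<lambda>n. F n (complex_of_real t)) \<longlonglongrightarrow> f (complex_of_real t)"
    and z: "z \<in> ball 0 1"
  shows "(\<lambda>n. Iop M (F n) z) \<longlonglongrightarrow> Iop M f z"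
  unfolding Iop_def
proof (rule integral_dominated_convergence[where w = "\<lambda>t. 1 / v (complex_of_real t) * (C / (1 - cmod z))"])
  show "(\<lambda>t. f (complex_of_real t) / (1 - complex_of_real t * z)) \<in> borel_measurable M"
    by (rule meas_kernel[OF cf z])
  show "(\<lambda>t. F n (complex_of_real t) / (1 - complex_of_real t * z)) \<in> borel_measurable M" for n
    by (rule meas_kernel[OF cF z])
  show "integrable M (\<lambda>t. 1 / v (complex_of_real t) * (C / (1 - cmod z)))"
    by (rule integrable_mult_left[OF intv])
  show "AE x in M. (\<lambda>n. F n (complex_of_real x) / (1 - complex_of_real x * z)) \<longlonglongrightarrow> f (complex_of_real x) / (1 - complex_of_real x * z)"
  proof (rule AE_I2)
    fix x assume "x \<in> space M"
    then have x: "x \<in> {0..<1}" by (simp add: space_M)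
    show "(\<lambda>n. F n (complex_of_real x) / (1 - complex_of_real x * z)) \<longlonglongrightarrow> f (complex_of_real x) / (1 - complex_of_real x * z)"
      using lim x by (auto simp: divide_inverse intro!: tendsto_mult_right)
  qed
  show "AE x in M. norm (F n (complex_of_real x) / (1 - complex_of_real x * z)) \<le> 1 / v (complex_of_real x) * (C / (1 - cmod z))" for n
  proof (rule AE_I2)
    fix x assume "x \<in> space M"
    then have x: "x \<in> {0..<1}" by (simp add: space_M)
    show "norm (F n (complex_of_real x) / (1 - complex_of_real x * z)) \<le> 1 / v (complex_of_real x) * (C / (1 - cmod z))"
      using kernel_bound[OF bF x z] by (simp add: mult.commute)
  qed
qed

lemma norm_dct:
  assumes cF: "\<And>n. continuous_on (ball 0 1) (F n)"
    and bF: "\<And>n. \<forall>z\<in>ball 0 1. v z * cmod (F n z) \<le> C"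
    and lim: "\<forall>t\<in>{0..<1}. (\<lambda>n. F n (complex_of_real t)) \<longlonglongrightarrow> 0"
  shows "(\<lambda>n. LINT t|M. cmod (F n (complex_of_real t))) \<longlonglongrightarrow> 0"
proof -
  have "(\<lambda>n. LINT t|M. cmod (F n (complex_of_real t))) \<longlonglongrightarrow> (LINT t|M. (0::real))"
  proof (rule integral_dominated_convergence[where w = "\<lambda>t. 1 / v (complex_of_real t) * C"])
    show "(\<lambda>t. 0::real) \<in> borel_measurable M" by simp
    show "(\<lambda>t. cmod (F n (complex_of_real t))) \<in> borel_measurable M" for n
      by (rule meas_norm[OF cF])
    show "integrable M (\<lambda>t. 1 / v (complex_of_real t) * C)"
      by (rule integrable_mult_left[OF intv])
    show "AE x in M. (\<lambda>n. cmod (F n (complex_of_real x))) \<longlonglongrightarrow> 0"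
    proof (rule AE_I2)
      fix x assume "x \<in> space M"
      then have x: "x \<in> {0..<1}" by (simp add: space_M)
      show "(\<lambda>n. cmod (F n (complex_of_real x))) \<longlonglongrightarrow> 0"
      proof -
        have "(\<lambda>n. F n (complex_of_real x)) \<longlonglongrightarrow> 0" using lim x by auto
        then show ?thesis by (rule tendsto_norm_zero)
      qed
    qed
    show "AE x in M. norm (cmod (F n (complex_of_real x))) \<le> 1 / v (complex_of_real x) * C" for n
    proof (rule AE_I2)
      fix x assume "x \<in> space M"
      then have x: "x \<in> {0..<1}" by (simp add: space_M)
      show "norm (cmod (F n (complex_of_real x))) \<le> 1 / v (complex_of_real x) * C"
        using pt_bound[OF bF x] by (simp add: mult.commute)
    qed
  qed
  then show ?thesis by simp
qed

lemma Iop_diff: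
  assumes "continuous_on (ball 0 1) f" "\<forall>z\<in>ball 0 1. v z * cmod (f z) \<le> C"
    "continuous_on (ball 0 1) g" "\<forall>z\<in>ball 0 1. v z * cmod (g z) \<le> D" "z \<in> ball 0 1"
  shows "Iop M (\<lambda>x. f x - g x) z = Iop M f z - Iop M g z"
  unfolding Iop_def diff_divide_distrib
  by (rule Bochner_Integration.integral_diff[OF integ_kernel[OF assms(1,2,5)] integ_kernel[OF assms(3,4,5)]])

lemma Iop_sum:
  assumes "\<And>j. j \<in> A \<Longrightarrow> continuous_on (ball 0 1) (e j)"
    "\<And>j. j \<in> A \<Longrightarrow> \<forall>z\<in>ball 0 1. v z * cmod (e j z) \<le> C" "z \<in> ball 0 1"
  shows "Iop M (\<lambda>x. \<Sum>j\<in>A. e j x) z = (\<Sum>j\<in>A. Iop M (e j) z)"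
  unfolding Iop_def sum_divide_distrib
  by (rule Bochner_Integration.integral_sum) (rule integ_kernel[OF assms(1,2,3)], auto)

lemma dil:
  assumes g: "g holomorphic_on ball 0 1" and s: "0 \<le> \<sigma>" "\<sigma> < 1"
  shows "(\<lambda>z. g (complex_of_real \<sigma> * z)) holomorphic_on ball 0 1"
    and "(\<lambda>z. g (complex_of_real \<sigma> * z)) \<in> H0 v"
    and "\<forall>z\<in>ball 0 1. v z * cmod (g z) \<le> C \<Longrightarrow> \<forall>z\<in>ball 0 1. v z * cmod (g (complex_of_real \<sigma> * z)) \<le> C"
proof -
  have img: "complex_of_real \<sigma> * z \<in> cball 0 \<sigma>" if "z \<in> ball 0 1" for z
    using that s by (auto simp: norm_mult intro!: mult_left_le)
  have cb: "cball 0 \<sigma> \<subseteq> ball (0::complex) 1" using s by auto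
  show hol: "(\<lambda>z. g (complex_of_real \<sigma> * z)) holomorphic_on ball 0 1"
  proof -
    have "(g \<circ> (\<lambda>z. complex_of_real \<sigma> * z)) holomorphic_on ball 0 1"
      by (rule holomorphic_on_compose_gen[OF _ g]) (use img cb in \<open>auto intro: holomorphic_intros\<close>)
    then show ?thesis by (simp add: o_def)
  qed
  have "compact (g ` cball 0 \<sigma>)"
    by (intro compact_continuous_image holomorphic_on_imp_continuous_on holomorphic_on_subset[OF g cb]) auto
  then obtain Bd where Bd: "Bd > 0" "\<And>x. x \<in> cball 0 \<sigma> \<Longrightarrow> cmod (g x) \<le> Bd"
    using compact_imp_bounded bounded_pos by (metis image_eqI)
  have gb: "cmod (g (complex_of_real \<sigma> * z)) \<le> Bd" if "z \<in> ball 0 1" for z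
    using Bd(2)[OF img[OF that]] .
  have hinf: "(\<lambda>z. g (complex_of_real \<sigma> * z)) \<in> Hinf v"
    unfolding Hinf_def
  proof (intro CollectI conjI exI ballI)
    show "v z * cmod (g (complex_of_real \<sigma> * z)) \<le> v 0 * Bd" if "z \<in> ball 0 1" for z
      using gb[OF that] weight_le0[OF wv that] weight_pos[OF wv that]
      by (intro mult_mono) auto
  qed (rule hol)
  show "(\<lambda>z. g (complex_of_real \<sigma> * z)) \<in> H0 v"
    unfolding H0_def
  proof (intro CollectI conjI allI impI hinf)
    fix \<epsilon> :: real assume e: "\<epsilon> > 0"
    obtain r where r: "0 \<le> r" "r < 1" "\<forall>z\<in>ball 0 1. r < cmod z \<longrightarrow> v z \<le> \<epsilon> / Bd"
      using weight_lim[OF wv, of "\<epsilon> / Bd"] e Bd(1) by auto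
    show "\<exists>r<1. \<forall>z\<in>ball 0 1. r < cmod z \<longrightarrow> v z * cmod (g (complex_of_real \<sigma> * z)) \<le> \<epsilon>"
    proof (intro exI[of _ r] conjI ballI impI)
      fix z :: complex assume z: "z \<in> ball 0 1" "r < cmod z"
      have "v z * cmod (g (complex_of_real \<sigma> * z)) \<le> (\<epsilon> / Bd) * Bd"
        using r(3) z gb[OF z(1)] weight_pos[OF wv z(1)] by (intro mult_mono) auto
      then show "v z * cmod (g (complex_of_real \<sigma> * z)) \<le> \<epsilon>" using Bd(1) by simp
    qed (use r in auto)
  qed
  assume C: "\<forall>z\<in>ball 0 1. v z * cmod (g z) \<le> C"
  show "\<forall>z\<in>ball 0 1. v z * cmod (g (complex_of_real \<sigma> * z)) \<le> C"
  proof
    fix z :: complex assume z: "z \<in> ball 0 1"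
    have sz: "complex_of_real \<sigma> * z \<in> ball 0 1" using img[OF z] cb by auto
    have "cmod (complex_of_real \<sigma> * z) \<le> cmod z"
      using s by (auto simp: norm_mult intro: mult_left_le_one_le)
    then have "v z \<le> v (complex_of_real \<sigma> * z)" by (rule weight_mono[OF wv sz z])
    then have "v z * cmod (g (complex_of_real \<sigma> * z)) \<le> v (complex_of_real \<sigma> * z) * cmod (g (complex_of_real \<sigma> * z))"
      by (intro mult_right_mono) auto
    also have "\<dots> \<le> C" using C sz by auto
    finally show "v z * cmod (g (complex_of_real \<sigma> * z)) \<le> C" .
  qed
qed

lemma mont:
  fixes F :: "nat \<Rightarrow> complex \<Rightarrow> complex"
  assumes hF: "\<And>n. F n holomorphic_on ball 0 1"
    and bF: "\<And>n. \<forall>z\<in>ball 0 1. v z * cmod (F n z) \<le> B"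
  obtains f r where "f holomorphic_on ball 0 1" "strict_mono r"
    "\<And>x. x \<in> ball 0 1 \<Longrightarrow> (\<lambda>n. F (r n) x) \<longlonglongrightarrow> f x"
    "\<And>\<rho> \<delta>. \<rho> < 1 \<Longrightarrow> \<delta> > 0 \<Longrightarrow> \<exists>N. \<forall>n\<ge>N. \<forall>z. cmod z \<le> \<rho> \<longrightarrow> cmod (F (r n) z - f z) \<le> \<delta>"
    "\<forall>z\<in>ball 0 1. v z * cmod (f z) \<le> B"
proof -
  have bnd: "\<exists>Bd. \<forall>h\<in>range F. \<forall>z\<in>K. norm (h z) \<le> Bd" if K: "compact K" "K \<subseteq> ball 0 1" for K
  proof -
    obtain \<rho> where r: "0 \<le> \<rho>" "\<rho> < 1" "\<forall>z\<in>K. cmod z \<le> \<rho>" using compact_in_ball[OF K] by auto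
    have vr: "0 < v (complex_of_real \<rho>)" using weight_pos[OF wv, of "complex_of_real \<rho>"] r by auto
    show ?thesis
    proof (intro exI[of _ "B / v (complex_of_real \<rho>)"] ballI)
      fix h z assume h: "h \<in> range F" and z: "z \<in> K"
      then obtain n where hn: "h = F n" by auto
      have zb: "z \<in> ball 0 1" using z K by auto
      have "v (complex_of_real \<rho>) \<le> v z" using weight_lower(1)[OF wv r(1,2) zb] r z by auto
      then have "v (complex_of_real \<rho>) * cmod (h z) \<le> v z * cmod (h z)" by (intro mult_right_mono) auto
      also have "\<dots> \<le> B" using bF zb hn by auto
      finally show "norm (h z) \<le> B / v (complex_of_real \<rho>)" using vr by (simp add: field_simps)
    qed
  qed
  obtain f r where f: "f holomorphic_on ball 0 1" "strict_mono r"
    "\<And>x. x \<in> ball 0 1 \<Longrightarrow> (\<lambda>n. F (r n) x) \<longlonglongrightarrow> f x"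
    "\<And>K. compact K \<Longrightarrow> K \<subseteq> ball 0 1 \<Longrightarrow> uniform_limit K (F \<circ> r) f sequentially"
    using Montel[of "ball 0 1" "range F" F] hF bnd by blast
  show ?thesis
  proof (rule that[OF f(1,2,3)])
    fix \<rho> \<delta> :: real assume r1: "\<rho> < 1" and d: "\<delta> > 0"
    have "cball 0 (max \<rho> 0) \<subseteq> ball (0::complex) 1" using r1 by auto
    then have "uniform_limit (cball 0 (max \<rho> 0)) (F \<circ> r) f sequentially" by (intro f(4)) auto
    then have "\<forall>\<^sub>F n in sequentially. \<forall>x\<in>cball 0 (max \<rho> 0). dist ((F \<circ> r) n x) (f x) < \<delta>"
      using d by (auto simp: uniform_limit_iff)
    then obtain N where N: "\<And>n x. n \<ge> N \<Longrightarrow> x \<in> cball 0 (max \<rho> 0) \<Longrightarrow> dist (F (r n) x) (f x) < \<delta>"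
      unfolding eventually_sequentially o_def by blast
    show "\<exists>N. \<forall>n\<ge>N. \<forall>z. cmod z \<le> \<rho> \<longrightarrow> cmod (F (r n) z - f z) \<le> \<delta>"
    proof (intro exI[of _ N] allI impI)
      fix n z assume "N \<le> n" "cmod z \<le> \<rho>"
      then have "dist (F (r n) z) (f z) < \<delta>" by (intro N) auto
      then show "cmod (F (r n) z - f z) \<le> \<delta>" by (simp add: dist_norm)
    qed
  next
    show "\<forall>z\<in>ball 0 1. v z * cmod (f z) \<le> B"
    proof
      fix z :: complex assume z: "z \<in> ball 0 1"
      have "(\<lambda>n. v z * cmod (F (r n) z)) \<longlonglongrightarrow> v z * cmod (f z)"
        by (intro tendsto_intros f(3) z)
      then show "v z * cmod (f z) \<le> B"
        by (rule LIMSEQ_le_const2) (use bF z in auto)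
    qed
  qed
qed


lemma hump:
  fixes e :: "nat \<Rightarrow> complex \<Rightarrow> complex" and zz :: "nat \<Rightarrow> complex"
  assumes RHS: "\<forall>f\<in>Hinf v. Iop M f \<in> H0 w"
    and eH: "\<And>k. e k \<in> H0 v"
    and eb: "\<And>k. \<forall>z\<in>ball 0 1. v z * cmod (e k z) \<le> K"
    and eu: "\<And>\<rho> \<delta>. \<rho> < 1 \<Longrightarrow> \<delta> > 0 \<Longrightarrow> \<exists>N. \<forall>k\<ge>N. \<forall>z. cmod z \<le> \<rho> \<longrightarrow> cmod (e k z) \<le> \<delta>"
    and zzb: "\<And>k. zz k \<in> ball 0 1"
    and zzI: "\<And>k. w (zz k) * cmod (Iop M (e k) (zz k)) > \<epsilon>"
    and epos: "\<epsilon> > 0"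
  shows False
proof -
  have eHinf: "e k \<in> Hinf v" for k using eH[of k] by (simp add: H0_def)
  have ehol: "e k holomorphic_on ball 0 1" for k using eHinf[of k] by (simp add: Hinf_def)
  have econt: "continuous_on (ball 0 1) (e k)" for k by (rule holomorphic_on_imp_continuous_on[OF ehol])
  have K0: "0 \<le> K"
  proof -
    have "v 0 * cmod (e 0 0) \<le> K" using eb[of 0] by auto
    moreover have "0 \<le> v 0 * cmod (e 0 0)" using weight_pos[OF wv, of 0] by auto
    ultimately show ?thesis by linarith
  qed
  have v0: "0 < v 0" "0 < w 0" using weight_pos[OF wv, of 0] weight_pos[OF ww, of 0] by auto
  define A where "A k = (LINT t|M. cmod (e k (complex_of_real t)))" for k
  have A0: "0 \<le> A k" for k unfolding A_def by simp
  have Alim: "A \<longlonglongrightarrow> 0"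
    unfolding A_def
  proof (rule norm_dct[OF econt eb])
    show "\<forall>t\<in>{0..<1}. (\<lambda>n. e n (complex_of_real t)) \<longlonglongrightarrow> 0"
    proof
      fix t :: real assume t: "t \<in> {0..<1}"
      show "(\<lambda>n. e n (complex_of_real t)) \<longlonglongrightarrow> 0"
      proof (rule LIMSEQ_I)
        fix r :: real assume r: "0 < r"
        obtain N where N: "\<forall>k\<ge>N. \<forall>z. cmod z \<le> t \<longrightarrow> cmod (e k z) \<le> r / 2"
          using eu[of t "r/2"] t r by auto
        show "\<exists>no. \<forall>n\<ge>no. norm (e n (complex_of_real t) - 0) < r"
        proof (intro exI[of _ N] allI impI)
          fix n assume "N \<le> n"
          then have "cmod (e n (complex_of_real t)) \<le> r / 2" using N t by auto
          then show "norm (e n (complex_of_real t) - 0) < r" using r by simp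
        qed
      qed
    qed
  qed
  have IB: "w z * cmod (Iop M (e k) z) \<le> w 0 * A k / (1 - cmod z)" if z: "z \<in> ball 0 1" for z k
  proof -
    have "cmod (Iop M (e k) z) \<le> A k / (1 - cmod z)"
      unfolding A_def by (rule Iop_bound[OF econt eb z])
    moreover have "w z \<le> w 0" by (rule weight_le0[OF ww z])
    moreover have "0 < w z" by (rule weight_pos[OF ww z])
    moreover have "0 \<le> A k / (1 - cmod z)" using A0[of k] z by auto
    ultimately have "w z * cmod (Iop M (e k) z) \<le> w 0 * (A k / (1 - cmod z))"
      by (intro mult_mono) auto
    then show ?thesis by simp
  qed
  have inner: "\<forall>\<^sub>F k in sequentially. \<forall>z\<in>ball 0 1. cmod z \<le> R \<longrightarrow> w z * cmod (Iop M (e k) z) \<le> \<delta>"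
    if R: "R < 1" and d: "\<delta> > 0" for R \<delta>
  proof -
    have pos: "0 < \<delta> * (1 - R) / w 0" using R d v0 by auto
    have "\<forall>\<^sub>F k in sequentially. dist (A k) 0 < \<delta> * (1 - R) / w 0"
      using Alim pos by (rule tendstoD)
    then show ?thesis
    proof (rule eventually_mono)
      fix k assume k: "dist (A k) 0 < \<delta> * (1 - R) / w 0"
      show "\<forall>z\<in>ball 0 1. cmod z \<le> R \<longrightarrow> w z * cmod (Iop M (e k) z) \<le> \<delta>"
      proof (intro ballI impI)
        fix z :: complex assume z: "z \<in> ball 0 1" "cmod z \<le> R"
        have Ak: "w 0 * A k \<le> \<delta> * (1 - R)" using k A0[of k] v0 by (simp add: field_simps)
        have "w 0 * A k / (1 - cmod z) \<le> \<delta> * (1 - R) / (1 - cmod z)"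
          using Ak z by (intro divide_right_mono) auto
        also have "\<dots> \<le> \<delta>" using z d R by (simp add: field_simps mult_left_mono)
        finally show "w z * cmod (Iop M (e k) z) \<le> \<delta>" using IB[OF z(1), of k] by linarith
      qed
    qed
  qed
  have zzlim: "\<forall>\<^sub>F k in sequentially. \<tau> < cmod (zz k)" if t: "\<tau> < 1" for \<tau>
  proof -
    have "\<forall>\<^sub>F k in sequentially. \<forall>z\<in>ball 0 1. cmod z \<le> \<tau> \<longrightarrow> w z * cmod (Iop M (e k) z) \<le> \<epsilon>"
      by (rule inner[OF t epos])
    then show ?thesis
    proof (rule eventually_mono)
      fix k assume "\<forall>z\<in>ball 0 1. cmod z \<le> \<tau> \<longrightarrow> w z * cmod (Iop M (e k) z) \<le> \<epsilon>"
      then show "\<tau> < cmod (zz k)" using zzb[of k] zzI[of k] by force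
    qed
  qed
  have "\<forall>k. \<exists>\<rho><1. \<forall>z\<in>ball 0 1. \<rho> < cmod z \<longrightarrow> v z * cmod (e k z) \<le> (1/2)^k"
    using eH unfolding H0_def by auto
  then obtain \<rho>v where \<rho>vall: "\<forall>k. \<rho>v k < 1 \<and> (\<forall>z\<in>ball 0 1. \<rho>v k < cmod z \<longrightarrow> v z * cmod (e k z) \<le> (1/2)^k)"
    using choice[of "\<lambda>k \<rho>. \<rho> < 1 \<and> (\<forall>z\<in>ball 0 1. \<rho> < cmod z \<longrightarrow> v z * cmod (e k z) \<le> (1/2)^k)"] by blast
  have \<rho>v: "\<And>k. \<rho>v k < 1"
    "\<And>k z. z \<in> ball 0 1 \<Longrightarrow> \<rho>v k < cmod z \<Longrightarrow> v z * cmod (e k z) \<le> (1/2)^k"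
    using \<rho>vall by auto
  have "\<forall>k. \<exists>t<1. \<forall>z\<in>ball 0 1. t < cmod z \<longrightarrow> w z * cmod (Iop M (e k) z) \<le> \<epsilon> / 8 * (1/2)^k"
  proof
    fix k
    have "Iop M (e k) \<in> H0 w" using RHS eHinf by auto
    moreover have "\<epsilon> / 8 * (1/2)^k > 0" using epos by auto
    ultimately show "\<exists>t<1. \<forall>z\<in>ball 0 1. t < cmod z \<longrightarrow> w z * cmod (Iop M (e k) z) \<le> \<epsilon> / 8 * (1/2)^k"
      unfolding H0_def by blast
  qed
  then obtain tw where twall: "\<forall>k. tw k < 1 \<and> (\<forall>z\<in>ball 0 1. tw k < cmod z \<longrightarrow> w z * cmod (Iop M (e k) z) \<le> \<epsilon> / 8 * (1/2)^k)"
    using choice[of "\<lambda>k t. t < 1 \<and> (\<forall>z\<in>ball 0 1. t < cmod z \<longrightarrow> w z * cmod (Iop M (e k) z) \<le> \<epsilon> / 8 * (1/2)^k)"] by blast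
  have tw: "\<And>k. tw k < 1"
    "\<And>k z. z \<in> ball 0 1 \<Longrightarrow> tw k < cmod z \<Longrightarrow> w z * cmod (Iop M (e k) z) \<le> \<epsilon> / 8 * (1/2)^k"
    using twall by auto
  define Pm where "Pm k = Max (\<rho>v ` {..k})" for k
  define Tm where "Tm k = Max (tw ` {..k})" for k
  define R where "R k = Max ((\<lambda>i. cmod (zz i)) ` {..k})" for k
  have Pm: "i \<le> k \<Longrightarrow> \<rho>v i \<le> Pm k" "Pm k < 1" for i k
  proof -
    show "i \<le> k \<Longrightarrow> \<rho>v i \<le> Pm k" unfolding Pm_def by (intro Max_ge) auto
    have "Pm k \<in> \<rho>v ` {..k}" unfolding Pm_def by (intro Max_in) auto
    then show "Pm k < 1" using \<rho>v(1) by auto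
  qed
  have Pmono: "k \<le> k' \<Longrightarrow> Pm k \<le> Pm k'" for k k'
  proof -
    assume "k \<le> k'"
    have "Pm k \<in> \<rho>v ` {..k}" unfolding Pm_def by (intro Max_in) auto
    then obtain i where "i \<le> k" "Pm k = \<rho>v i" by auto
    then show ?thesis using Pm(1)[of i k'] \<open>k \<le> k'\<close> by auto
  qed
  have Tm: "i \<le> k \<Longrightarrow> tw i \<le> Tm k" "Tm k < 1" for i k
  proof -
    show "i \<le> k \<Longrightarrow> tw i \<le> Tm k" unfolding Tm_def by (intro Max_ge) auto
    have "Tm k \<in> tw ` {..k}" unfolding Tm_def by (intro Max_in) auto
    then show "Tm k < 1" using tw(1) by auto
  qed
  have Rk: "i \<le> k \<Longrightarrow> cmod (zz i) \<le> R k" "R k < 1" for i k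
  proof -
    show "i \<le> k \<Longrightarrow> cmod (zz i) \<le> R k" unfolding R_def by (intro Max_ge) auto
    have "R k \<in> (\<lambda>i. cmod (zz i)) ` {..k}" unfolding R_def by (intro Max_in) auto
    then show "R k < 1" using zzb by auto
  qed
  have nxt: "\<exists>k'>k. (\<forall>z\<in>ball 0 1. cmod z \<le> Pm k \<longrightarrow> v z * cmod (e k' z) \<le> (1/2)^k)
      \<and> (\<forall>z\<in>ball 0 1. cmod z \<le> R k \<longrightarrow> w z * cmod (Iop M (e k') z) \<le> \<epsilon> / 8 * (1/2)^k)
      \<and> Tm k < cmod (zz k') \<and> 1 - 1 / (real k + 2) < cmod (zz k')" for k
  proof -
    have e1: "\<forall>\<^sub>F k' in sequentially. \<forall>z\<in>ball 0 1. cmod z \<le> Pm k \<longrightarrow> v z * cmod (e k' z) \<le> (1/2)^k"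
    proof -
      obtain N where N: "\<forall>k'\<ge>N. \<forall>z. cmod z \<le> Pm k \<longrightarrow> cmod (e k' z) \<le> (1/2)^k / v 0"
        using eu[OF Pm(2), of "(1/2)^k / v 0"] v0 by auto
      have "\<forall>z\<in>ball 0 1. cmod z \<le> Pm k \<longrightarrow> v z * cmod (e k' z) \<le> (1/2)^k" if k': "k' \<ge> N" for k'
      proof (intro ballI impI)
        fix z :: complex assume z: "z \<in> ball 0 1" "cmod z \<le> Pm k"
        have "v z * cmod (e k' z) \<le> v 0 * ((1/2)^k / v 0)"
          using N k' z weight_le0[OF wv z(1)] weight_pos[OF wv z(1)] by (intro mult_mono) auto
        then show "v z * cmod (e k' z) \<le> (1/2)^k" using v0 by simp
      qed
      then show ?thesis unfolding eventually_sequentially by blast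
    qed
    have e2: "\<forall>\<^sub>F k' in sequentially. \<forall>z\<in>ball 0 1. cmod z \<le> R k \<longrightarrow> w z * cmod (Iop M (e k') z) \<le> \<epsilon> / 8 * (1/2)^k"
      by (rule inner[OF Rk(2)]) (use epos in auto)
    have e3: "\<forall>\<^sub>F k' in sequentially. max (Tm k) (1 - 1 / (real k + 2)) < cmod (zz k')"
      by (rule zzlim) (use Tm(2) in auto)
    have "\<forall>\<^sub>F k' in sequentially. k' > k" by (rule eventually_gt_at_top)
    then have "\<forall>\<^sub>F k' in sequentially. k' > k \<and> (\<forall>z\<in>ball 0 1. cmod z \<le> Pm k \<longrightarrow> v z * cmod (e k' z) \<le> (1/2)^k)
      \<and> (\<forall>z\<in>ball 0 1. cmod z \<le> R k \<longrightarrow> w z * cmod (Iop M (e k') z) \<le> \<epsilon> / 8 * (1/2)^k)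
      \<and> Tm k < cmod (zz k') \<and> 1 - 1 / (real k + 2) < cmod (zz k')"
      using e1 e2 e3 by eventually_elim auto
    then obtain k' where "k' > k \<and> (\<forall>z\<in>ball 0 1. cmod z \<le> Pm k \<longrightarrow> v z * cmod (e k' z) \<le> (1/2)^k)
      \<and> (\<forall>z\<in>ball 0 1. cmod z \<le> R k \<longrightarrow> w z * cmod (Iop M (e k') z) \<le> \<epsilon> / 8 * (1/2)^k)
      \<and> Tm k < cmod (zz k') \<and> 1 - 1 / (real k + 2) < cmod (zz k')"
      unfolding eventually_sequentially by blast
    then show ?thesis by blast
  qed
  then have "\<forall>k. \<exists>k'. k' > k \<and> (\<forall>z\<in>ball 0 1. cmod z \<le> Pm k \<longrightarrow> v z * cmod (e k' z) \<le> (1/2)^k)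
      \<and> (\<forall>z\<in>ball 0 1. cmod z \<le> R k \<longrightarrow> w z * cmod (Iop M (e k') z) \<le> \<epsilon> / 8 * (1/2)^k)
      \<and> Tm k < cmod (zz k') \<and> 1 - 1 / (real k + 2) < cmod (zz k')" by blast
  then obtain nx where nxall: "\<forall>k. nx k > k \<and> (\<forall>z\<in>ball 0 1. cmod z \<le> Pm k \<longrightarrow> v z * cmod (e (nx k) z) \<le> (1/2)^k)
      \<and> (\<forall>z\<in>ball 0 1. cmod z \<le> R k \<longrightarrow> w z * cmod (Iop M (e (nx k)) z) \<le> \<epsilon> / 8 * (1/2)^k)
      \<and> Tm k < cmod (zz (nx k)) \<and> 1 - 1 / (real k + 2) < cmod (zz (nx k))"
    by (rule choice[THEN exE]) 
  have nx: "\<And>k. nx k > k"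
    "\<And>k z. z \<in> ball 0 1 \<Longrightarrow> cmod z \<le> Pm k \<Longrightarrow> v z * cmod (e (nx k) z) \<le> (1/2)^k"
    "\<And>k z. z \<in> ball 0 1 \<Longrightarrow> cmod z \<le> R k \<Longrightarrow> w z * cmod (Iop M (e (nx k)) z) \<le> \<epsilon> / 8 * (1/2)^k"
    "\<And>k. Tm k < cmod (zz (nx k))" "\<And>k. 1 - 1 / (real k + 2) < cmod (zz (nx k))"
    using nxall by auto
  define r where "r j = (nx ^^ (Suc j)) 0" for j
  have rS: "r (Suc j) = nx (r j)" for j unfolding r_def by simp
  have smr: "strict_mono r" unfolding strict_mono_Suc_iff using rS nx(1) by auto
  have rge: "j \<le> r j" for j by (rule seq_suble[OF smr])
  have rmono: "i \<le> j \<Longrightarrow> r i \<le> r j" for i j using smr strict_mono_less_eq by blast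
  have half_mono: "i \<le> j \<Longrightarrow> (1/2::real)^j \<le> (1/2)^i" for i j
    by (rule power_decreasing) auto
  define S where "S J = (\<lambda>z. \<Sum>j<J. e (r j) z)" for J
  have Shol: "S J holomorphic_on ball 0 1" for J
    unfolding S_def by (intro holomorphic_on_sum ehol)
  have Sb: "\<forall>z\<in>ball 0 1. v z * cmod (S J z) \<le> K + 4" for J
  proof
    fix z :: complex assume z: "z \<in> ball 0 1"
    define sp where "sp j \<longleftrightarrow> cmod z \<le> \<rho>v (r j) \<and> (j = 0 \<or> Pm (r (j - 1)) < cmod z)" for j
    have uniq1: "False" if "sp j" "sp j'" "j < j'" for j j'
    proof -
      have "j' \<noteq> 0" using that by auto
      then have a: "Pm (r (j' - 1)) < cmod z" using that(2) unfolding sp_def by auto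
      have "cmod z \<le> \<rho>v (r j)" using that(1) unfolding sp_def by auto
      also have "\<dots> \<le> Pm (r j)" by (rule Pm(1)) simp
      also have "\<dots> \<le> Pm (r (j' - 1))" using that(3) by (intro Pmono rmono) auto
      finally show False using a by simp
    qed
    have uniq: "j = j'" if "sp j" "sp j'" for j j'
      using uniq1[OF that] uniq1[OF that(2,1)] by (cases j j' rule: linorder_cases) auto
    have tb: "v z * cmod (e (r j) z) \<le> 2 * (1/2)^j + (if sp j then K else 0)" for j
    proof (cases "sp j")
      case True
      have "v z * cmod (e (r j) z) \<le> K" using eb[of "r j"] z by auto
      moreover have "0 \<le> 2 * (1/2::real)^j" by simp
      moreover have "2 * (1/2::real)^j + (if sp j then K else 0) = 2 * (1/2)^j + K" using True by simp
      ultimately show ?thesis by linarith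
    next
      case False
      show ?thesis
      proof (cases "\<rho>v (r j) < cmod z")
        case True
        then have "v z * cmod (e (r j) z) \<le> (1/2)^(r j)" using \<rho>v(2) z by auto
        also have "\<dots> \<le> (1/2)^j" by (rule half_mono[OF rge])
        also have "\<dots> \<le> 2 * (1/2)^j" by simp
        finally show ?thesis using False by simp
      next
        case c2: False
        then have "j \<noteq> 0" "cmod z \<le> Pm (r (j - 1))" using False unfolding sp_def by auto
        then obtain i where ji: "j = Suc i" by (cases j) auto
        have "v z * cmod (e (r j) z) = v z * cmod (e (nx (r i)) z)" using ji rS by simp
        also have "\<dots> \<le> (1/2)^(r i)" using nx(2)[OF z] \<open>cmod z \<le> Pm (r (j - 1))\<close> ji by auto
        also have "\<dots> \<le> (1/2)^i" by (rule half_mono[OF rge])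
        also have "\<dots> = 2 * (1/2)^j" using ji by simp
        finally show ?thesis using False by simp
      qed
    qed
    have spsum: "(\<Sum>j<J. (if sp j then K else 0)) \<le> K"
    proof (cases "\<exists>j0<J. sp j0")
      case True
      then obtain j0 where j0: "j0 < J" "sp j0" by auto
      have "(\<Sum>j<J. (if sp j then K else 0)) = (\<Sum>j<J. (if j = j0 then K else 0))"
        using uniq j0 by (intro sum.cong) auto
      also have "\<dots> = K" using j0 by simp
      finally show ?thesis by simp
    next
      case False
      then have "(\<Sum>j<J. (if sp j then K else 0)) = (\<Sum>j<J. 0::real)" by (intro sum.cong) auto
      then show ?thesis using K0 by simp
    qed
    have "v z * cmod (S J z) \<le> v z * (\<Sum>j<J. cmod (e (r j) z))"
      unfolding S_def using weight_pos[OF wv z] by (intro mult_left_mono norm_sum) auto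
    also have "\<dots> = (\<Sum>j<J. v z * cmod (e (r j) z))" by (simp add: sum_distrib_left)
    also have "\<dots> \<le> (\<Sum>j<J. 2 * (1/2)^j + (if sp j then K else 0))" by (intro sum_mono tb)
    also have "\<dots> = 2 * (\<Sum>j<J. (1/2::real)^j) + (\<Sum>j<J. (if sp j then K else 0))"
      by (simp add: sum.distrib sum_distrib_left)
    also have "\<dots> \<le> 2 * 2 + K" using geo_le[of J] spsum by linarith
    finally show "v z * cmod (S J z) \<le> K + 4" by simp
  qed
  obtain fs s where fs: "fs holomorphic_on ball 0 1" "strict_mono s"
    "\<And>x. x \<in> ball 0 1 \<Longrightarrow> (\<lambda>n. S (s n) x) \<longlonglongrightarrow> fs x"
    "\<And>\<rho> \<delta>. \<rho> < 1 \<Longrightarrow> \<delta> > 0 \<Longrightarrow> \<exists>N. \<forall>n\<ge>N. \<forall>z. cmod z \<le> \<rho> \<longrightarrow> cmod (S (s n) z - fs z) \<le> \<delta>"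
    "\<forall>z\<in>ball 0 1. v z * cmod (fs z) \<le> K + 4"
    using mont[of S "K + 4", OF Shol Sb] by blast
  have fsH: "fs \<in> Hinf v" unfolding Hinf_def using fs(1,5) by blast
  have IfsH: "Iop M fs \<in> H0 w" using RHS fsH by auto
  have Scont: "continuous_on (ball 0 1) (S J)" for J by (rule holomorphic_on_imp_continuous_on[OF Shol])
  have lower: "\<epsilon> / 2 \<le> w (zz (r m)) * cmod (Iop M fs (zz (r m)))" for m
  proof -
    define x where "x = zz (r m)"
    have xb: "x \<in> ball 0 1" unfolding x_def by (rule zzb)
    have termb: "w x * cmod (Iop M (e (r j)) x) \<le> \<epsilon> / 4 * (1/2)^j" if "j \<noteq> m" for j
    proof (cases "j < m")
      case True
      then obtain m' where m': "m = Suc m'" by (cases m) auto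
      have "tw (r j) \<le> Tm (r m')" using True m' by (intro Tm(1) rmono) auto
      also have "\<dots> < cmod x" unfolding x_def m' rS by (rule nx(4))
      finally have "w x * cmod (Iop M (e (r j)) x) \<le> \<epsilon> / 8 * (1/2)^(r j)" using tw(2)[OF xb] by auto
      also have "\<dots> \<le> \<epsilon> / 8 * (1/2)^j" using epos by (intro mult_left_mono half_mono rge) auto
      also have "\<dots> \<le> \<epsilon> / 4 * (1/2)^j" using epos by (intro mult_right_mono) auto
      finally show ?thesis .
    next
      case False
      then have "m < j" using that by auto
      then obtain i where ji: "j = Suc i" "m \<le> i" by (cases j) auto
      have "cmod x \<le> R (r i)" unfolding x_def using ji by (intro Rk(1) rmono)
      then have "w x * cmod (Iop M (e (nx (r i))) x) \<le> \<epsilon> / 8 * (1/2)^(r i)" using nx(3)[OF xb] by auto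
      also have "\<dots> \<le> \<epsilon> / 8 * (1/2)^i" using epos by (intro mult_left_mono half_mono rge) auto
      also have "\<dots> = \<epsilon> / 4 * (1/2)^j" using ji by simp
      finally show ?thesis using ji rS by simp
    qed
    have bigS: "\<epsilon> / 2 < w x * cmod (Iop M (S J) x)" if J: "m < J" for J
    proof -
      define a where "a j = Iop M (e (r j)) x" for j
      have IS: "Iop M (S J) x = (\<Sum>j<J. a j)"
        unfolding S_def a_def by (rule Iop_sum[OF econt eb xb])
      have split: "(\<Sum>j<J. a j) = a m + (\<Sum>j\<in>{..<J} - {m}. a j)"
        using J by (subst sum.remove[of _ m]) auto
      have rest: "w x * cmod (\<Sum>j\<in>{..<J} - {m}. a j) \<le> \<epsilon> / 2"
      proof -
        have "w x * cmod (\<Sum>j\<in>{..<J} - {m}. a j) \<le> w x * (\<Sum>j\<in>{..<J} - {m}. cmod (a j))"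
          using weight_pos[OF ww xb] by (intro mult_left_mono norm_sum) auto
        also have "\<dots> = (\<Sum>j\<in>{..<J} - {m}. w x * cmod (a j))" by (simp add: sum_distrib_left)
        also have "\<dots> \<le> (\<Sum>j\<in>{..<J} - {m}. \<epsilon> / 4 * (1/2)^j)"
          unfolding a_def by (intro sum_mono termb) auto
        also have "\<dots> \<le> (\<Sum>j<J. \<epsilon> / 4 * (1/2)^j)"
          using epos by (intro sum_mono2) auto
        also have "\<dots> = \<epsilon> / 4 * (\<Sum>j<J. (1/2::real)^j)" by (simp add: sum_distrib_left)
        also have "\<dots> \<le> \<epsilon> / 4 * 2" using epos geo_le[of J] by (intro mult_left_mono) auto
        finally show ?thesis by simp
      qed
      have am: "\<epsilon> < w x * cmod (a m)" unfolding a_def x_def by (rule zzI)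
      have "w x * cmod (a m) \<le> w x * cmod (Iop M (S J) x) + w x * cmod (\<Sum>j\<in>{..<J} - {m}. a j)"
      proof -
        have "cmod (a m) \<le> cmod (Iop M (S J) x) + cmod (\<Sum>j\<in>{..<J} - {m}. a j)"
        proof -
          have "cmod (a m) = cmod ((a m + (\<Sum>j\<in>{..<J} - {m}. a j)) - (\<Sum>j\<in>{..<J} - {m}. a j))" by simp
          also have "\<dots> \<le> cmod (a m + (\<Sum>j\<in>{..<J} - {m}. a j)) + cmod (\<Sum>j\<in>{..<J} - {m}. a j)"
            by (rule norm_triangle_ineq4)
          finally show ?thesis unfolding IS split .
        qed
        then have "w x * cmod (a m) \<le> w x * (cmod (Iop M (S J) x) + cmod (\<Sum>j\<in>{..<J} - {m}. a j))"
          using weight_pos[OF ww xb] by (intro mult_left_mono) auto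
        then show ?thesis by (simp add: distrib_left)
      qed
      then show ?thesis using rest am by linarith
    qed
    have lim: "(\<lambda>n. Iop M (S (s n)) x) \<longlonglongrightarrow> Iop M fs x"
    proof (rule Iop_dct[OF Scont Sb holomorphic_on_imp_continuous_on[OF fs(1)] _ xb])
      show "\<forall>t\<in>{0..<1}. (\<lambda>n. S (s n) (complex_of_real t)) \<longlonglongrightarrow> fs (complex_of_real t)"
        using fs(3) by auto
    qed
    have lim2: "(\<lambda>n. w x * cmod (Iop M (S (s n)) x)) \<longlonglongrightarrow> w x * cmod (Iop M fs x)"
      by (intro tendsto_intros lim)
    have "\<epsilon> / 2 \<le> w x * cmod (Iop M fs x)"
    proof (rule LIMSEQ_le_const[OF lim2])
      show "\<exists>N. \<forall>n\<ge>N. \<epsilon> / 2 \<le> w x * cmod (Iop M (S (s n)) x)"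
      proof (intro exI[of _ "Suc m"] allI impI)
        fix n assume "Suc m \<le> n"
        then have "m < s n" using seq_suble[OF fs(2), of n] by auto
        then show "\<epsilon> / 2 \<le> w x * cmod (Iop M (S (s n)) x)" using bigS by (simp add: less_imp_le)
      qed
    qed
    then show ?thesis unfolding x_def .
  qed
  obtain \<rho> where \<rho>: "\<rho> < 1" "\<forall>z\<in>ball 0 1. \<rho> < cmod z \<longrightarrow> w z * cmod (Iop M fs z) \<le> \<epsilon> / 4"
  proof -
    have "\<epsilon> / 4 > 0" using epos by simp
    then show ?thesis using IfsH that unfolding H0_def by blast
  qed
  define \<rho>' where "\<rho>' = max \<rho> 0"
  have \<rho>': "0 \<le> \<rho>'" "\<rho>' < 1" "\<rho> \<le> \<rho>'" using \<rho>(1) unfolding \<rho>'_def by auto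
  obtain n :: nat where n: "1 / (1 - \<rho>') < real n" using reals_Archimedean2 by blast
  have "1 / (real (r n) + 2) \<le> 1 / (real n + 2)"
    using rge[of n] by (intro divide_left_mono) auto
  also have "\<dots> < 1 - \<rho>'"
  proof -
    have "1 / (1 - \<rho>') < real n + 2" using n by linarith
    then have "1 < (real n + 2) * (1 - \<rho>')" using \<rho>' by (simp add: field_simps)
    then show ?thesis using \<rho>' by (simp add: field_simps)
  qed
  finally have "\<rho>' < 1 - 1 / (real (r n) + 2)" by linarith
  also have "\<dots> < cmod (zz (r (Suc n)))" unfolding rS by (rule nx(5))
  finally have "\<rho> < cmod (zz (r (Suc n)))" using \<rho>' by linarith
  then have "w (zz (r (Suc n))) * cmod (Iop M fs (zz (r (Suc n)))) \<le> \<epsilon> / 4" using \<rho>(2) zzb by auto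
  moreover have "\<epsilon> / 2 \<le> w (zz (r (Suc n))) * cmod (Iop M fs (zz (r (Suc n))))" by (rule lower)
  ultimately show False using epos by linarith
qed

lemma sig_lim:
  assumes "continuous_on (ball 0 1) g" "t \<in> ball 0 1"
  shows "(\<lambda>n. g (complex_of_real (1 - inverse (real (Suc n))) * t)) \<longlonglongrightarrow> g t"
proof -
  have c: "isCont g t" using assms continuous_on_eq_continuous_at[of "ball 0 1" g] by auto
  have "(\<lambda>n. complex_of_real (1 - inverse (real (Suc n))) * t) \<longlonglongrightarrow> complex_of_real (1 - 0) * t"
    by (intro tendsto_intros LIMSEQ_inverse_real_of_nat)
  then have "(\<lambda>n. complex_of_real (1 - inverse (real (Suc n))) * t) \<longlonglongrightarrow> t" by simp
  then show ?thesis by (rule isCont_tendsto_compose[OF c])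
qed

lemma sig_range: "0 \<le> 1 - inverse (real (Suc n))" "1 - inverse (real (Suc n)) < 1"
  by (auto simp: field_simps)

lemma H0_cong: "g \<in> H0 u \<Longrightarrow> \<forall>z\<in>ball 0 1. h z = g z \<Longrightarrow> h \<in> H0 u"
proof -
  assume g: "g \<in> H0 u" and hg: "\<forall>z\<in>ball 0 1. h z = g z"
  have "h holomorphic_on ball 0 1 \<longleftrightarrow> g holomorphic_on ball 0 1"
    by (rule holomorphic_cong) (use hg in auto)
  then show ?thesis using g hg unfolding H0_def Hinf_def by auto
qed

lemma core:
  fixes F :: "nat \<Rightarrow> complex \<Rightarrow> complex"
  assumes RHS: "\<forall>f\<in>Hinf v. Iop M f \<in> H0 w"
    and hF: "\<And>n. F n holomorphic_on ball 0 1"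
    and bF: "\<And>n. \<forall>z\<in>ball 0 1. v z * cmod (F n z) \<le> B"
  shows "\<exists>(r::nat\<Rightarrow>nat) f. strict_mono r \<and> f \<in> Hinf v \<and>
    (\<forall>\<epsilon>>0. \<exists>N::nat. \<forall>n\<ge>N. \<forall>z\<in>ball 0 1. w z * cmod (Iop M (F (r n)) z - Iop M f z) \<le> \<epsilon>)"
proof -
  obtain f r where f: "f holomorphic_on ball 0 1" "strict_mono r"
    "\<And>x. x \<in> ball 0 1 \<Longrightarrow> (\<lambda>n. F (r n) x) \<longlonglongrightarrow> f x"
    "\<And>\<rho> \<delta>. \<rho> < 1 \<Longrightarrow> \<delta> > 0 \<Longrightarrow> \<exists>N. \<forall>n\<ge>N. \<forall>z. cmod z \<le> \<rho> \<longrightarrow> cmod (F (r n) z - f z) \<le> \<delta>"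
    "\<forall>z\<in>ball 0 1. v z * cmod (f z) \<le> B"
    using mont[of F B, OF hF bF] by blast
  have fH: "f \<in> Hinf v" unfolding Hinf_def using f(1,5) by blast
  have fc: "continuous_on (ball 0 1) f" by (rule holomorphic_on_imp_continuous_on[OF f(1)])
  have Fc: "continuous_on (ball 0 1) (F n)" for n by (rule holomorphic_on_imp_continuous_on[OF hF])
  have conv: "\<forall>\<epsilon>>0. \<exists>N::nat. \<forall>n\<ge>N. \<forall>z\<in>ball 0 1. w z * cmod (Iop M (F (r n)) z - Iop M f z) \<le> \<epsilon>"
  proof (rule ccontr)
    assume "\<not> ?thesis"
    then obtain \<epsilon> where epos: "\<epsilon> > 0" and bad: "\<forall>N. \<exists>n\<ge>N. \<exists>z\<in>ball 0 1. w z * cmod (Iop M (F (r n)) z - Iop M f z) > \<epsilon>"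
      by (auto simp: not_le)
    then obtain nq where nq: "\<forall>N. nq N \<ge> N \<and> (\<exists>z\<in>ball 0 1. w z * cmod (Iop M (F (r (nq N))) z - Iop M f z) > \<epsilon>)"
      using choice[of "\<lambda>N n. n \<ge> N \<and> (\<exists>z\<in>ball 0 1. w z * cmod (Iop M (F (r n)) z - Iop M f z) > \<epsilon>)"] by blast
    then obtain zq where zq: "\<forall>N. zq N \<in> ball 0 1 \<and> w (zq N) * cmod (Iop M (F (r (nq N))) (zq N) - Iop M f (zq N)) > \<epsilon>"
      using choice[of "\<lambda>N z. z \<in> ball 0 1 \<and> w z * cmod (Iop M (F (r (nq N))) z - Iop M f z) > \<epsilon>"] by blast
    define d where "d k = (\<lambda>z. F (r (nq k)) z - f z)" for k
    have dhol: "d k holomorphic_on ball 0 1" for k unfolding d_def by (intro holomorphic_intros hF f(1))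
    have dc: "continuous_on (ball 0 1) (d k)" for k by (rule holomorphic_on_imp_continuous_on[OF dhol])
    have db: "\<forall>z\<in>ball 0 1. v z * cmod (d k z) \<le> 2 * B" for k
    proof
      fix z :: complex assume z: "z \<in> ball 0 1"
      have "v z * cmod (d k z) \<le> v z * (cmod (F (r (nq k)) z) + cmod (f z))"
        unfolding d_def using weight_pos[OF wv z] by (intro mult_left_mono norm_triangle_ineq4) auto
      also have "\<dots> = v z * cmod (F (r (nq k)) z) + v z * cmod (f z)" by (simp add: distrib_left)
      also have "\<dots> \<le> 2 * B"
      proof -
        have "v z * cmod (F (r (nq k)) z) \<le> B" using bF[of "r (nq k)"] z by auto
        moreover have "v z * cmod (f z) \<le> B" using f(5) z by auto
        ultimately show ?thesis by linarith
      qed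
      finally show "v z * cmod (d k z) \<le> 2 * B" .
    qed
    have dI: "\<epsilon> < w (zq k) * cmod (Iop M (d k) (zq k))" for k
    proof -
      have "Iop M (d k) (zq k) = Iop M (F (r (nq k))) (zq k) - Iop M f (zq k)"
        unfolding d_def by (rule Iop_diff[OF Fc bF fc f(5)]) (use zq in auto)
      then show ?thesis using zq by auto
    qed
    have du: "\<exists>N. \<forall>k\<ge>N. \<forall>z. cmod z \<le> \<rho> \<longrightarrow> cmod (d k z) \<le> \<delta>" if rd: "\<rho> < 1" "\<delta> > 0" for \<rho> \<delta>
    proof -
      obtain N where N: "\<forall>n\<ge>N. \<forall>z. cmod z \<le> \<rho> \<longrightarrow> cmod (F (r n) z - f z) \<le> \<delta>" using f(4)[OF rd] by blast
      show ?thesis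
      proof (intro exI[of _ N] allI impI)
        fix k z assume "N \<le> k" "cmod z \<le> \<rho>"
        moreover have "k \<le> nq k" using nq by auto
        ultimately show "cmod (d k z) \<le> \<delta>" unfolding d_def using N by auto
      qed
    qed
    define sg where "sg n = 1 - inverse (real (Suc n))" for n
    have "\<exists>n. \<epsilon> < w (zq k) * cmod (Iop M (\<lambda>z. d k (complex_of_real (sg n) * z)) (zq k))" for k
    proof -
      have zk: "zq k \<in> ball 0 1" using zq by auto
      have "(\<lambda>n. Iop M (\<lambda>z. d k (complex_of_real (sg n) * z)) (zq k)) \<longlonglongrightarrow> Iop M (d k) (zq k)"
      proof (rule Iop_dct[OF _ _ dc[of k] _ zk])
        show "continuous_on (ball 0 1) (\<lambda>z. d k (complex_of_real (sg n) * z))" for n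
          unfolding sg_def by (intro holomorphic_on_imp_continuous_on dil(1)[OF dhol sig_range])
        show "\<forall>z\<in>ball 0 1. v z * cmod (d k (complex_of_real (sg n) * z)) \<le> 2 * B" for n
          unfolding sg_def by (intro dil(3)[OF dhol sig_range] db)
        show "\<forall>t\<in>{0..<1}. (\<lambda>n. d k (complex_of_real (sg n) * complex_of_real t)) \<longlonglongrightarrow> d k (complex_of_real t)"
          unfolding sg_def using sig_lim[OF dc] by auto
      qed
      then have "(\<lambda>n. w (zq k) * cmod (Iop M (\<lambda>z. d k (complex_of_real (sg n) * z)) (zq k))) \<longlonglongrightarrow> w (zq k) * cmod (Iop M (d k) (zq k))"
        by (intro tendsto_intros)
      then have "\<forall>\<^sub>F n in sequentially. \<epsilon> < w (zq k) * cmod (Iop M (\<lambda>z. d k (complex_of_real (sg n) * z)) (zq k))"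
        using dI[of k] by (rule order_tendstoD(1))
      then show ?thesis unfolding eventually_sequentially by blast
    qed
    then obtain ns where ns: "\<forall>k. \<epsilon> < w (zq k) * cmod (Iop M (\<lambda>z. d k (complex_of_real (sg (ns k)) * z)) (zq k))"
      using choice[of "\<lambda>k n. \<epsilon> < w (zq k) * cmod (Iop M (\<lambda>z. d k (complex_of_real (sg n) * z)) (zq k))"] by blast
    define e where "e k = (\<lambda>z. d k (complex_of_real (sg (ns k)) * z))" for k
    show False
    proof (rule hump[OF RHS])
      show "e k \<in> H0 v" for k unfolding e_def sg_def by (rule dil(2)[OF dhol sig_range])
      show "\<forall>z\<in>ball 0 1. v z * cmod (e k z) \<le> 2 * B" for k
        unfolding e_def sg_def by (intro dil(3)[OF dhol sig_range] db)
      show "zq k \<in> ball 0 1" for k using zq by auto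
      show "\<epsilon> < w (zq k) * cmod (Iop M (e k) (zq k))" for k unfolding e_def using ns by auto
      show "0 < \<epsilon>" by (rule epos)
      fix \<rho> \<delta> :: real assume r: "\<rho> < 1" "0 < \<delta>"
      obtain N where N: "\<forall>k\<ge>N. \<forall>z. cmod z \<le> \<rho> \<longrightarrow> cmod (d k z) \<le> \<delta>" using du[OF r] by blast
      show "\<exists>N. \<forall>k\<ge>N. \<forall>z. cmod z \<le> \<rho> \<longrightarrow> cmod (e k z) \<le> \<delta>"
      proof (intro exI[of _ N] allI impI)
        fix k z assume k: "N \<le> k" and z: "cmod z \<le> \<rho>"
        have sr: "0 \<le> sg (ns k)" "sg (ns k) < 1" unfolding sg_def by (rule sig_range)+
        have "cmod (complex_of_real (sg (ns k)) * z) = \<bar>sg (ns k)\<bar> * cmod z" by (simp add: norm_mult)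
        also have "\<dots> \<le> cmod z" using sr by (intro mult_left_le_one_le) auto
        finally have "cmod (complex_of_real (sg (ns k)) * z) \<le> cmod z" .
        then show "cmod (e k z) \<le> \<delta>" unfolding e_def using N k z by auto
      qed
    qed
  qed
  show ?thesis using f(2) fH conv by blast
qed

lemma fwd:
  assumes comp: "compact_op (Iop M) (H0 v) (H0 w) v w" and fH: "f \<in> Hinf v"
  shows "Iop M f \<in> H0 w"
proof -
  obtain C where fhol: "f holomorphic_on ball 0 1" and fb: "\<forall>z\<in>ball 0 1. v z * cmod (f z) \<le> C"
    using fH unfolding Hinf_def by blast
  have fc: "continuous_on (ball 0 1) f" by (rule holomorphic_on_imp_continuous_on[OF fhol])
  define F where "F n = (\<lambda>z. f (complex_of_real (1 - inverse (real (Suc n))) * z))" for n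
  have FH: "F n \<in> H0 v" for n unfolding F_def by (rule dil(2)[OF fhol sig_range])
  have Fb: "\<forall>z\<in>ball 0 1. v z * cmod (F n z) \<le> C" for n unfolding F_def by (rule dil(3)[OF fhol sig_range fb])
  have Fc: "continuous_on (ball 0 1) (F n)" for n
    unfolding F_def by (intro holomorphic_on_imp_continuous_on dil(1)[OF fhol sig_range])
  obtain r :: "nat \<Rightarrow> nat" and g where r: "strict_mono r" "g \<in> H0 w"
    "\<forall>\<epsilon>>0. \<exists>N::nat. \<forall>n\<ge>N. \<forall>z\<in>ball 0 1. w z * cmod (Iop M (F (r n)) z - g z) \<le> \<epsilon>"
  proof -
    have cc: "\<forall>F B. (\<forall>n. F n \<in> H0 v) \<and> (\<forall>n. \<forall>z\<in>ball 0 1. v z * cmod (F n z) \<le> B) \<longrightarrow>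
        (\<exists>(r::nat\<Rightarrow>nat) g. strict_mono r \<and> g \<in> H0 w \<and>
           (\<forall>\<epsilon>>0. \<exists>N::nat. \<forall>n\<ge>N. \<forall>z\<in>ball 0 1. w z * cmod (Iop M (F (r n)) z - g z) \<le> \<epsilon>))"
      using comp unfolding compact_op_def by (rule conjunct2)
    have "\<exists>(r::nat\<Rightarrow>nat) g. strict_mono r \<and> g \<in> H0 w \<and>
           (\<forall>\<epsilon>>0. \<exists>N::nat. \<forall>n\<ge>N. \<forall>z\<in>ball 0 1. w z * cmod (Iop M (F (r n)) z - g z) \<le> \<epsilon>)"
      by (rule cc[rule_format]) (use FH Fb in auto)
    then show ?thesis by (elim exE conjE) (rule that; assumption)
  qed
  have "Iop M f z = g z" if z: "z \<in> ball 0 1" for z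
  proof -
    have l1: "(\<lambda>n. Iop M (F (r n)) z) \<longlonglongrightarrow> Iop M f z"
    proof (rule Iop_dct[OF Fc Fb fc _ z])
      show "\<forall>t\<in>{0..<1}. (\<lambda>n. F (r n) (complex_of_real t)) \<longlonglongrightarrow> f (complex_of_real t)"
      proof
        fix t :: real assume "t \<in> {0..<1}"
        then have "(\<lambda>n. F n (complex_of_real t)) \<longlonglongrightarrow> f (complex_of_real t)"
          unfolding F_def by (intro sig_lim fc) auto
        from LIMSEQ_subseq_LIMSEQ[OF this r(1)]
        show "(\<lambda>n. F (r n) (complex_of_real t)) \<longlonglongrightarrow> f (complex_of_real t)"
          by (simp add: o_def)
      qed
    qed
    have wz: "0 < w z" by (rule weight_pos[OF ww z])
    have l2: "(\<lambda>n. Iop M (F (r n)) z) \<longlonglongrightarrow> g z"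
    proof (rule LIMSEQ_I)
      fix e :: real assume e: "0 < e"
      have pos: "e / 2 * w z > 0" using e wz by simp
      obtain N where N: "\<forall>n\<ge>N. \<forall>y\<in>ball 0 1. w y * cmod (Iop M (F (r n)) y - g y) \<le> e / 2 * w z"
        using r(3)[rule_format, OF pos] by blast
      show "\<exists>no. \<forall>n\<ge>no. norm (Iop M (F (r n)) z - g z) < e"
      proof (intro exI[of _ N] allI impI)
        fix n assume "N \<le> n"
        then have "w z * cmod (Iop M (F (r n)) z - g z) \<le> e / 2 * w z" using N z by blast
        then have "w z * cmod (Iop M (F (r n)) z - g z) \<le> w z * (e / 2)" by (simp add: mult.commute)
        then have "cmod (Iop M (F (r n)) z - g z) \<le> e / 2" using wz by (rule mult_left_le_imp_le)
        then show "norm (Iop M (F (r n)) z - g z) < e" using e by simp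
      qed
    qed
    show ?thesis using LIMSEQ_unique[OF l1 l2] .
  qed
  then show ?thesis using H0_cong[OF r(2)] by blast
qed

end

theorem proposition11:
  fixes M :: "real measure" and v w :: "complex \<Rightarrow> real"
  assumes "finite_measure M"
    and "sets M = sets (restrict_space borel {0..<1::real})"
    and "weight v" and "weight w"
    and "integrable M (\<lambda>t. 1 / v (complex_of_real t))"
    and "\<forall>f\<in>H0 v. Iop M f \<in> H0 w"
    and "bounded_op (Iop M) (H0 v) v w"
  shows "(compact_op (Iop M) (H0 v) (H0 w) v w \<and> compact_op (Iop M) (Hinf v) (Hinf w) v w)
         \<longleftrightarrow> (\<forall>f\<in>Hinf v. Iop M f \<in> H0 w)"
proof -
  interpret setting M v w using assms(2,3,4,5) by unfold_locales
  show ?thesis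
  proof
    assume "compact_op (Iop M) (H0 v) (H0 w) v w \<and> compact_op (Iop M) (Hinf v) (Hinf w) v w"
    then have c: "compact_op (Iop M) (H0 v) (H0 w) v w" by blast
    show "\<forall>f\<in>Hinf v. Iop M f \<in> H0 w" using fwd[OF c] by blast
  next
    assume RHS: "\<forall>f\<in>Hinf v. Iop M f \<in> H0 w"
    have seq: "\<exists>(r::nat\<Rightarrow>nat) g. strict_mono r \<and> g \<in> H0 w \<and>
        (\<forall>\<epsilon>>0. \<exists>N::nat. \<forall>n\<ge>N. \<forall>z\<in>ball 0 1. w z * cmod (Iop M (F (r n)) z - g z) \<le> \<epsilon>)"
      if FH: "\<forall>n. F n \<in> Hinf v" and Fb: "\<forall>n. \<forall>z\<in>ball 0 1. v z * cmod (F n z) \<le> B"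
      for F :: "nat \<Rightarrow> complex \<Rightarrow> complex" and B :: real
    proof -
      have hF: "F n holomorphic_on ball 0 1" for n using FH unfolding Hinf_def by blast
      have "\<exists>(r::nat\<Rightarrow>nat) f. strict_mono r \<and> f \<in> Hinf v \<and>
          (\<forall>\<epsilon>>0. \<exists>N::nat. \<forall>n\<ge>N. \<forall>z\<in>ball 0 1. w z * cmod (Iop M (F (r n)) z - Iop M f z) \<le> \<epsilon>)"
        by (rule core[OF RHS hF]) (use Fb in blast)
      then obtain r :: "nat \<Rightarrow> nat" and f where rf: "strict_mono r" "f \<in> Hinf v"
          "\<forall>\<epsilon>>0. \<exists>N::nat. \<forall>n\<ge>N. \<forall>z\<in>ball 0 1. w z * cmod (Iop M (F (r n)) z - Iop M f z) \<le> \<epsilon>"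
        by blast
      have "Iop M f \<in> H0 w" using RHS rf(2) by blast
      then show ?thesis using rf(1,3) by blast
    qed
    have c1: "compact_op (Iop M) (H0 v) (H0 w) v w"
      unfolding compact_op_def
    proof (intro conjI allI impI)
      show "\<forall>f\<in>H0 v. Iop M f \<in> H0 w" by (rule assms(6))
      fix F :: "nat \<Rightarrow> complex \<Rightarrow> complex" and B :: real
      assume a: "(\<forall>n. F n \<in> H0 v) \<and> (\<forall>n. \<forall>z\<in>ball 0 1. v z * cmod (F n z) \<le> B)"
      then have "\<forall>n. F n \<in> Hinf v" by (auto simp: H0_def)
      then show "\<exists>(r::nat\<Rightarrow>nat) g. strict_mono r \<and> g \<in> H0 w \<and>
        (\<forall>\<epsilon>>0. \<exists>N::nat. \<forall>n\<ge>N. \<forall>z\<in>ball 0 1. w z * cmod (Iop M (F (r n)) z - g z) \<le> \<epsilon>)"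
        using seq a by blast
    qed
    have c2: "compact_op (Iop M) (Hinf v) (Hinf w) v w"
      unfolding compact_op_def
    proof (intro conjI allI impI)
      show "\<forall>f\<in>Hinf v. Iop M f \<in> Hinf w" using RHS by (auto simp: H0_def)
      fix F :: "nat \<Rightarrow> complex \<Rightarrow> complex" and B :: real
      assume a: "(\<forall>n. F n \<in> Hinf v) \<and> (\<forall>n. \<forall>z\<in>ball 0 1. v z * cmod (F n z) \<le> B)"
      then obtain r :: "nat \<Rightarrow> nat" and g where rg: "strict_mono r" "g \<in> H0 w"
        "\<forall>\<epsilon>>0. \<exists>N::nat. \<forall>n\<ge>N. \<forall>z\<in>ball 0 1. w z * cmod (Iop M (F (r n)) z - g z) \<le> \<epsilon>"
        using seq[of F B] by blast
      have "g \<in> Hinf w" using rg(2) by (simp add: H0_def)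
      then show "\<exists>(r::nat\<Rightarrow>nat) g. strict_mono r \<and> g \<in> Hinf w \<and>
        (\<forall>\<epsilon>>0. \<exists>N::nat. \<forall>n\<ge>N. \<forall>z\<in>ball 0 1. w z * cmod (Iop M (F (r n)) z - g z) \<le> \<epsilon>)"
        using rg(1,3) by blast
    qed
    show "compact_op (Iop M) (H0 v) (H0 w) v w \<and> compact_op (Iop M) (Hinf v) (Hinf w) v w"
      using c1 c2 by blast
  qed
qed

end
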